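(* Let $d\ge1$, let $n$ be a positive integer, and let $X\subseteq\mathbb{R}^d$ be a bounded set contained in a unimodular copy of $n\cdot\Delta_d$. Then $\mathrm{Flt}_d(X)\le 2nd\cdot\mathrm{Flt}(d)$ and $\mathrm{Flt}^{\mathbb{R}}_d(X)\le nd\cdot\mathrm{Flt}(d)$.
   Context: Convex body: non-empty compact convex subset of $\mathbb{R}^d$; $\mathrm{width}(K)=\min_{u\in(\mathbb{Z}^d)^*\setminus\{0\}}\max_{x,y\in K}|u(x)-u(y)|$; $\mathrm{Flt}(d)=\sup\{\mathrm{width}(K): K \text{ convex body}, K\cap\mathbb{Z}^d=\emptyset\}$. A unimodular (resp. $\mathbb{R}$-unimodular) copy of $Y\subseteq\mathbb{R}^d$ is $\{Ay+b:y\in Y\}$ with $A\in\mathrm{GL}(d,\mathbb{Z})$ and $b\in\mathbb{Z}^d$ (resp. $b\in\mathbb{R}^d$). $\Delta_d=\mathrm{conv}(0,e_1,\dots,e_d)$. For bounded $X\subseteq\mathbb{R}^d$: $\mathrm{Flt}_d(X)=\sup\{\mathrm{width}(K): K\text{ convex body not containing a unimodular copy of }X\}$ and $\mathrm{Flt}^{\mathbb{R}}_d(X)=\sup\{\mathrm{width}(K): K\text{ convex body not containing an }\mathbb{R}\text{-unimodular copy of }X\}$. *)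

theory Defs
  imports "HOL-Analysis.Analysis"
begin

definition int_vec :: "real^'n \<Rightarrow> bool" where
  "int_vec x \<longleftrightarrow> (\<forall>i. x $ i \<in> \<int>)"

definition unimodular_matrix :: "real^'n^'n \<Rightarrow> bool" where
  "unimodular_matrix A \<longleftrightarrow> (\<forall>i j. A $ i $ j \<in> \<int>) \<and> (det A = 1 \<or> det A = -1)"

definition convex_body :: "(real^'n) set \<Rightarrow> bool" where
  "convex_body K \<longleftrightarrow> K \<noteq> {} \<and> compact K \<and> convex K"

text \<open>Lattice width: dual lattice vectors are identified with integer vectors u,
  acting by the inner product.\<close>
definition lattice_width :: "(real^'n) set \<Rightarrow> real" where
  "lattice_width K = Inf {Sup {\<bar>u \<bullet> x - u \<bullet> y\<bar> | x y. x \<in> K \<and> y \<in> K} | u. int_vec u \<and> u \<noteq> 0}"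

definition unimodular_copy :: "(real^'n) set \<Rightarrow> (real^'n) set \<Rightarrow> bool" where
  "unimodular_copy Y Z \<longleftrightarrow> (\<exists>A b. unimodular_matrix A \<and> int_vec b \<and> Z = (\<lambda>y. A *v y + b) ` Y)"

definition R_unimodular_copy :: "(real^'n) set \<Rightarrow> (real^'n) set \<Rightarrow> bool" where
  "R_unimodular_copy Y Z \<longleftrightarrow> (\<exists>A b. unimodular_matrix A \<and> Z = (\<lambda>y. A *v y + b) ` Y)"

definition std_simplex :: "(real^'n) set" where
  "std_simplex = convex hull (insert 0 {axis i 1 | i. True})"

definition Flt :: "'n::finite itself \<Rightarrow> ereal" where
  "Flt _ = Sup {ereal (lattice_width K) | K :: (real^'n) set.
                 convex_body K \<and> (\<forall>x\<in>K. \<not> int_vec x)}"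

definition Flt_X :: "(real^'n) set \<Rightarrow> ereal" where
  "Flt_X X = Sup {ereal (lattice_width K) | K. convex_body K \<and>
                 \<not> (\<exists>Z. unimodular_copy X Z \<and> Z \<subseteq> K)}"

definition FltR_X :: "(real^'n) set \<Rightarrow> ereal" where
  "FltR_X X = Sup {ereal (lattice_width K) | K. convex_body K \<and>
                 \<not> (\<exists>Z. R_unimodular_copy X Z \<and> Z \<subseteq> K)}"

end

theory Submission
  imports Defs
begin


lemma int_vec_add: "int_vec x \<Longrightarrow> int_vec y \<Longrightarrow> int_vec (x + y)"
  by (simp add: int_vec_def)
lemma int_vec_diff: "int_vec x \<Longrightarrow> int_vec y \<Longrightarrow> int_vec (x - y)"
  by (simp add: int_vec_def)
lemma int_vec_zero: "int_vec 0" by (simp add: int_vec_def)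
lemma int_vec_scale: "c \<in> \<int> \<Longrightarrow> int_vec x \<Longrightarrow> int_vec (c *\<^sub>R x)"
  by (simp add: int_vec_def)
lemma int_vec_axis: "int_vec (axis i 1)"
  by (simp add: int_vec_def axis_def)
lemma int_vec_inner: "int_vec x \<Longrightarrow> int_vec y \<Longrightarrow> x \<bullet> y \<in> \<int>"
  unfolding inner_vec_def int_vec_def by (intro Ints_sum) (simp add: Ints_mult)
lemma int_vec_sum: "(\<And>v. v \<in> S \<Longrightarrow> int_vec (f v)) \<Longrightarrow> int_vec (sum f S)"
  by (induction S rule: infinite_finite_induct) (auto simp: int_vec_zero int_vec_add)

inductive_set zsp :: "(real^'n) set \<Rightarrow> (real^'n) set" for B where
  zsp0: "0 \<in> zsp B"
| zspB: "b \<in> B \<Longrightarrow> b \<in> zsp B"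
| zspD: "x \<in> zsp B \<Longrightarrow> y \<in> zsp B \<Longrightarrow> x - y \<in> zsp B"

lemma zsp_neg: "x \<in> zsp B \<Longrightarrow> - x \<in> zsp B"
  using zspD[OF zsp0, of x B] by simp
lemma zsp_add: "x \<in> zsp B \<Longrightarrow> y \<in> zsp B \<Longrightarrow> x + y \<in> zsp B"
  using zspD[OF _ zsp_neg, of x B y] by simp
lemma zsp_nat: "x \<in> zsp B \<Longrightarrow> real k *\<^sub>R x \<in> zsp B"
  by (induction k) (auto intro: zsp0 zsp_add simp: algebra_simps)
lemma zsp_int: "c \<in> \<int> \<Longrightarrow> x \<in> zsp B \<Longrightarrow> c *\<^sub>R x \<in> zsp B"
proof -
  assume c: "c \<in> \<int>" and x: "x \<in> zsp B"
  then obtain k where k: "c = of_int k" by (auto elim: Ints_cases)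
  show ?thesis
  proof (cases "k \<ge> 0")
    case True
    then have "c = real (nat k)" using k by simp
    then show ?thesis using zsp_nat[OF x] by simp
  next
    case False
    then have "c = - real (nat (-k))" using k by simp
    then show ?thesis using zsp_neg[OF zsp_nat[OF x, of "nat (-k)"]] by simp
  qed
qed
lemma zsp_trans: "x \<in> zsp A \<Longrightarrow> A \<subseteq> zsp B \<Longrightarrow> x \<in> zsp B"
  by (induction rule: zsp.induct) (auto intro: zsp0 zspD)
lemma zsp_mono: "x \<in> zsp A \<Longrightarrow> A \<subseteq> B \<Longrightarrow> x \<in> zsp B"
  by (erule zsp_trans) (auto intro: zspB)
lemma zsp_span: "x \<in> zsp A \<Longrightarrow> x \<in> span A"
  by (induction rule: zsp.induct) (auto intro: span_0 span_base span_diff)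
lemma zsp_int_vec: "x \<in> zsp A \<Longrightarrow> (\<forall>v\<in>A. int_vec v) \<Longrightarrow> int_vec x"
  by (induction rule: zsp.induct) (auto intro: int_vec_zero int_vec_diff)
lemma zsp_sum: "finite S \<Longrightarrow> (\<And>v. v \<in> S \<Longrightarrow> c v \<in> \<int>) \<Longrightarrow> S \<subseteq> A \<Longrightarrow> (\<Sum>v\<in>S. c v *\<^sub>R v) \<in> zsp A"
proof (induction S rule: finite_induct)
  case (insert x F)
  then have "c x *\<^sub>R x \<in> zsp A" by (intro zsp_int zspB) auto
  with insert show ?case by (auto intro: zsp_add)
qed (auto intro: zsp0)

definition wid :: "real^'n \<Rightarrow> (real^'n) set \<Rightarrow> real" where
  "wid u K = Sup {\<bar>u \<bullet> x - u \<bullet> y\<bar> | x y. x \<in> K \<and> y \<in> K}"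

lemma lattice_width_wid: "lattice_width K = Inf {wid u K | u. int_vec u \<and> u \<noteq> 0}"
  unfolding lattice_width_def wid_def by simp

lemma wid_bdd: "bounded K \<Longrightarrow> bdd_above {\<bar>u \<bullet> x - u \<bullet> y\<bar> | x y. x \<in> K \<and> y \<in> K}"
proof -
  assume "bounded K"
  then obtain R where R: "\<And>x. x \<in> K \<Longrightarrow> norm x \<le> R" by (auto simp: bounded_iff)
  have "\<bar>u \<bullet> x - u \<bullet> y\<bar> \<le> norm u * (2*R)" if "x \<in> K" "y \<in> K" for x y
  proof -
    have "\<bar>u \<bullet> x - u \<bullet> y\<bar> = \<bar>u \<bullet> (x - y)\<bar>" by (simp add: inner_diff_right)
    also have "\<dots> \<le> norm u * norm (x - y)" by (rule Cauchy_Schwarz_ineq2)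
    also have "norm (x - y) \<le> 2*R" using R[OF that(1)] R[OF that(2)] norm_triangle_ineq4[of x y] by linarith
    then have "norm u * norm (x - y) \<le> norm u * (2*R)" by (simp add: mult_left_mono)
    finally show ?thesis .
  qed
  then show ?thesis by (auto simp: bdd_above_def)
qed

lemma wid_ge: "bounded K \<Longrightarrow> x \<in> K \<Longrightarrow> y \<in> K \<Longrightarrow> \<bar>u \<bullet> x - u \<bullet> y\<bar> \<le> wid u K"
  unfolding wid_def by (rule cSup_upper[OF _ wid_bdd]) auto

lemma wid_le: "K \<noteq> {} \<Longrightarrow> (\<And>x y. x \<in> K \<Longrightarrow> y \<in> K \<Longrightarrow> \<bar>u \<bullet> x - u \<bullet> y\<bar> \<le> c) \<Longrightarrow> wid u K \<le> c"
  unfolding wid_def by (rule cSup_least) blast+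

lemma wid_nonneg: "bounded K \<Longrightarrow> K \<noteq> {} \<Longrightarrow> 0 \<le> wid u K"
  using wid_ge[of K _ _ u] by fastforce

lemma wid_mono_shift: "bounded K' \<Longrightarrow> K \<noteq> {} \<Longrightarrow> (\<And>x. x \<in> K \<Longrightarrow> p + x \<in> K') \<Longrightarrow> wid u K \<le> wid u K'"
proof (rule wid_le)
  fix x y assume "bounded K'" "\<And>x. x \<in> K \<Longrightarrow> p + x \<in> K'" "x \<in> K" "y \<in> K"
  then have "\<bar>u \<bullet> (p+x) - u \<bullet> (p+y)\<bar> \<le> wid u K'" by (intro wid_ge) auto
  then show "\<bar>u \<bullet> x - u \<bullet> y\<bar> \<le> wid u K'" by (simp add: inner_add_right)
qed

lemma wid_scale: "bounded K \<Longrightarrow> K \<noteq> {} \<Longrightarrow> c > 0 \<Longrightarrow> c * wid u K \<le> wid u ((\<lambda>x. c *\<^sub>R x) ` K)"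
proof -
  assume K: "bounded K" "K \<noteq> {}" and c: "c > 0"
  have b: "bounded ((\<lambda>x. c *\<^sub>R x) ` K)" using K by (simp add: bounded_scaling)
  have "wid u K \<le> wid u ((\<lambda>x. c *\<^sub>R x) ` K) / c"
  proof (rule wid_le[OF K(2)])
    fix x y assume "x \<in> K" "y \<in> K"
    then have "\<bar>u \<bullet> (c *\<^sub>R x) - u \<bullet> (c *\<^sub>R y)\<bar> \<le> wid u ((\<lambda>x. c *\<^sub>R x) ` K)"
      by (intro wid_ge[OF b]) auto
    moreover have "\<bar>u \<bullet> (c *\<^sub>R x) - u \<bullet> (c *\<^sub>R y)\<bar> = c * \<bar>u \<bullet> x - u \<bullet> y\<bar>"
      using c by (simp add: right_diff_distrib[symmetric] abs_mult)
    ultimately show "\<bar>u \<bullet> x - u \<bullet> y\<bar> \<le> wid u ((\<lambda>x. c *\<^sub>R x) ` K) / c"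
      using c by (simp add: field_simps)
  qed
  then show ?thesis using c by (simp add: field_simps)
qed

lemma lattice_width_le_wid: "bounded K \<Longrightarrow> K \<noteq> {} \<Longrightarrow> int_vec u \<Longrightarrow> u \<noteq> 0 \<Longrightarrow> lattice_width K \<le> wid u K"
  unfolding lattice_width_wid
  by (rule cInf_lower) (auto intro!: wid_nonneg simp: bdd_below_def)

lemma lattice_width_ge: "(\<And>u. int_vec u \<Longrightarrow> u \<noteq> 0 \<Longrightarrow> c \<le> wid u K) \<Longrightarrow> c \<le> lattice_width K"
  unfolding lattice_width_wid
proof (rule cInf_greatest)
  show "{wid u K |u. int_vec u \<and> u \<noteq> 0} \<noteq> {}"
    using int_vec_axis[of undefined] by (auto simp: axis_eq_0_iff)
qed auto



definition flat :: "real \<Rightarrow> 'n::finite itself \<Rightarrow> bool" where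
  "flat F _ \<longleftrightarrow> (\<forall>K::(real^'n) set. convex_body K \<and> F < lattice_width K \<longrightarrow> (\<exists>x\<in>K. int_vec x))"

lemma finite_lattice_ball: "finite {q::real^'n. int_vec q \<and> norm q \<le> B}"
proof -
  define S where "S = (of_int ` {-\<lceil>B\<rceil>..\<lceil>B\<rceil>} :: real set)"
  have fS: "finite S" unfolding S_def by simp
  have "{q::real^'n. int_vec q \<and> norm q \<le> B} \<subseteq> vec_lambda ` (Pi\<^sub>E UNIV (\<lambda>_. S))"
  proof
    fix q :: "real^'n" assume q: "q \<in> {q. int_vec q \<and> norm q \<le> B}"
    have "q $ i \<in> S" for i
    proof -
      from q have "q $ i \<in> \<int>" by (auto simp: int_vec_def)
      then obtain k where k: "q $ i = of_int k" by (auto elim: Ints_cases)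
      have "\<bar>q $ i\<bar> \<le> B" using q component_le_norm_cart[of q i] by auto
      then have "\<bar>k\<bar> \<le> \<lceil>B\<rceil>" using k by linarith
      then show ?thesis unfolding S_def using k by (intro image_eqI[of _ _ k]) auto
    qed
    then have "vec_nth q \<in> Pi\<^sub>E UNIV (\<lambda>_. S)" by auto
    then show "q \<in> vec_lambda ` (Pi\<^sub>E UNIV (\<lambda>_. S))" by (intro image_eqI[of _ _ "vec_nth q"]) auto
  qed
  moreover have "finite (vec_lambda ` (Pi\<^sub>E UNIV (\<lambda>_. S)))" using fS by (intro finite_imageI finite_PiE) auto
  ultimately show ?thesis by (rule finite_subset)
qed

lemma reduce_lattice:
  assumes V: "finite V" "\<forall>v\<in>V. int_vec v" and q: "int_vec q" and qa: "q - a \<in> span V"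
  shows "\<exists>q'. int_vec q' \<and> q - q' \<in> zsp V \<and> norm (q' - a) \<le> (\<Sum>v\<in>V. norm v)"
proof -
  obtain c where c: "q - a = (\<Sum>v\<in>V. c v *\<^sub>R v)" using qa span_finite[OF V(1)] by auto
  define q' where "q' = q - (\<Sum>v\<in>V. of_int \<lfloor>c v\<rfloor> *\<^sub>R v)"
  have z: "q - q' \<in> zsp V" unfolding q'_def by (auto intro!: zsp_sum V)
  have iq: "int_vec q'" using zsp_int_vec[OF z V(2)] q int_vec_diff[of q "q - q'"] by simp
  have "q' - a = (\<Sum>v\<in>V. (c v - of_int \<lfloor>c v\<rfloor>) *\<^sub>R v)"
    unfolding q'_def using c by (simp add: scaleR_diff_left sum_subtractf algebra_simps)
  then have "norm (q' - a) \<le> (\<Sum>v\<in>V. norm ((c v - of_int \<lfloor>c v\<rfloor>) *\<^sub>R v))" by (metis norm_sum)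
  also have "\<dots> \<le> (\<Sum>v\<in>V. norm v)"
  proof (rule sum_mono)
    fix v
    have "0 \<le> c v - of_int \<lfloor>c v\<rfloor>" "c v - of_int \<lfloor>c v\<rfloor> \<le> 1" by linarith+
    then show "norm ((c v - of_int \<lfloor>c v\<rfloor>) *\<^sub>R v) \<le> norm v"
      by (simp add: mult_left_le_one_le)
  qed
  finally show ?thesis using z iq by blast
qed

lemma int_inner_ge1: "int_vec u \<Longrightarrow> int_vec v \<Longrightarrow> u \<bullet> v \<noteq> 0 \<Longrightarrow> 1 \<le> \<bar>u \<bullet> v\<bar>"
  using Ints_nonzero_abs_ge1 int_vec_inner by blast

lemma cyl_cover:
  fixes M :: "(real^'n) set"
  assumes flat: "flat F TYPE('n)" and F0: "F \<ge> 0" and V: "finite V" "\<forall>v\<in>V. int_vec v"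
    and M: "convex_body M" and om: "\<omega> > F"
    and W: "\<And>u. int_vec u \<Longrightarrow> u \<noteq> 0 \<Longrightarrow> (\<forall>v\<in>V. u \<bullet> v = 0) \<Longrightarrow> \<omega> \<le> wid u M"
  shows "\<exists>q m s. int_vec q \<and> m \<in> M \<and> s \<in> span V \<and> q = p + m + s"
proof -
  define N where "N = F + 1"
  define P where "P = convex hull (insert 0 ((\<lambda>v. N *\<^sub>R v) ` V \<union> (\<lambda>v. (-N) *\<^sub>R v) ` V))"
  define K where "K = {x + y | x y. x \<in> (+) p ` M \<and> y \<in> P}"
  have cP: "compact P" unfolding P_def using V by (intro compact_convex_hull finite_imp_compact) auto
  have PV: "P \<subseteq> span V" unfolding P_def
    by (rule hull_minimal) (auto intro: span_0 span_mul span_base span_neg subspace_imp_convex subspace_span)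
  have P0: "0 \<in> P" unfolding P_def by (rule hull_inc) simp
  have PN: "N *\<^sub>R v \<in> P" "(-N) *\<^sub>R v \<in> P" if "v \<in> V" for v
    unfolding P_def using that by (auto intro!: hull_inc)
  have Mc: "compact M" "convex M" "M \<noteq> {}" using M by (auto simp: convex_body_def)
  have Kc: "compact K" unfolding K_def using Mc cP by (intro compact_sums compact_translation) auto
  have "K = (\<Union>x\<in>(+) p ` M. \<Union>y\<in>P. {x + y})" unfolding K_def by auto
  moreover have "convex ((+) p ` M)" using Mc by (simp add: convex_translation)
  moreover have "convex P" unfolding P_def by simp
  ultimately have Kv: "convex K" by (metis convex_sums)
  have Kn: "K \<noteq> {}" using Mc P0 unfolding K_def by auto
  have Kb: "convex_body K" using Kc Kv Kn by (simp add: convex_body_def)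
  have "min \<omega> (2*N) \<le> lattice_width K"
  proof (rule lattice_width_ge)
    fix u :: "real^'n" assume u: "int_vec u" "u \<noteq> 0"
    show "min \<omega> (2*N) \<le> wid u K"
    proof (cases "\<forall>v\<in>V. u \<bullet> v = 0")
      case True
      have "wid u M \<le> wid u K"
      proof (rule wid_mono_shift[of K M p])
        show "p + x \<in> K" if "x \<in> M" for x
          unfolding K_def using that P0 by (intro CollectI exI[of _ "p + x"] exI[of _ 0]) auto
      qed (use Kc Mc in \<open>auto simp: compact_imp_bounded\<close>)
      then show ?thesis using W[OF u True] by linarith
    next
      case False
      then obtain v where v: "v \<in> V" "u \<bullet> v \<noteq> 0" by auto
      obtain m where m: "m \<in> M" using Mc by auto
      have a: "p + m + N *\<^sub>R v \<in> K" "p + m + (-N) *\<^sub>R v \<in> K" unfolding K_def using m PN[OF v(1)]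
        by (intro CollectI exI[of _ "p + m"] exI[of _ "N *\<^sub>R v"] exI[of _ "(-N) *\<^sub>R v"]; auto)+
      have "\<bar>u \<bullet> (p + m + N *\<^sub>R v) - u \<bullet> (p + m + (-N) *\<^sub>R v)\<bar> = 2 * N * \<bar>u \<bullet> v\<bar>"
      proof -
        have "(F + 1) * (u \<bullet> v) - (- F - 1) * (u \<bullet> v) = (2 * F + 2) * (u \<bullet> v)" by algebra
        then show ?thesis using F0 by (simp add: inner_add_right N_def abs_mult)
      qed
      also have "\<dots> \<ge> 2 * N" using int_inner_ge1[OF u(1) _ v(2)] V v F0 by (simp add: N_def)
      finally have "2*N \<le> wid u K" using wid_ge[OF compact_imp_bounded[OF Kc] a, of u] by linarith
      then show ?thesis by linarith
    qed
  qed
  moreover have "F < min \<omega> (2*N)" using om F0 by (simp add: N_def)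
  ultimately obtain q where q: "q \<in> K" "int_vec q" using flat Kb unfolding flat_def by force
  then obtain m y where "m \<in> M" "y \<in> P" "q = p + m + y" unfolding K_def by auto
  then show ?thesis using q PV by (intro exI[of _ q] exI[of _ m] exI[of _ y]) auto
qed



lemma chord:
  fixes M :: "(real^'n) set"
  assumes flat: "flat F TYPE('n)" and F0: "F \<ge> 0" and V: "finite V" "\<forall>v\<in>V. int_vec v"
    and SV: "span V \<noteq> UNIV"
    and M: "convex_body M" and om: "\<omega> > F"
    and W: "\<And>u. int_vec u \<Longrightarrow> u \<noteq> 0 \<Longrightarrow> (\<forall>v\<in>V. u \<bullet> v = 0) \<Longrightarrow> \<omega> \<le> wid u M"
  shows "\<exists>x z z'. int_vec x \<and> x \<notin> span V \<and> z \<in> M \<and> z' \<in> M \<and> z' - z - x \<in> span V"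
proof -
  obtain e where e: "e \<notin> span V" using SV by auto
  obtain y0 z0 where yz: "y0 \<in> span V" "\<And>w. w \<in> span V \<Longrightarrow> orthogonal z0 w" "e = y0 + z0"
    by (rule orthogonal_subspace_decomp_exists[of V e]) blast
  have z0ne: "z0 \<noteq> 0" using e yz by auto
  have z0s: "z0 \<bullet> s = 0" if "s \<in> span V" for s using yz(2)[OF that] by (simp add: orthogonal_def)
  have z0e: "z0 \<bullet> e > 0" using z0s[OF yz(1)] z0ne by (simp add: yz(3) inner_add_right)
  define C where "C = {m + s | m s. m \<in> M \<and> s \<in> span V}"
  have Mc: "compact M" "convex M" "M \<noteq> {}" using M by (auto simp: convex_body_def)
  have "C = (\<Union>x\<in>M. \<Union>y\<in>span V. {x + y})" unfolding C_def by auto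
  then have Ccl: "closed C" using Mc by (simp add: compact_closed_sums closed_subspace subspace_span)
  have Csh: "c + s \<in> C" if "c \<in> C" "s \<in> span V" for c s
  proof -
    from that obtain m s0 where "c = m + s0" "m \<in> M" "s0 \<in> span V" unfolding C_def by auto
    then show ?thesis unfolding C_def using that(2)
      by (intro CollectI exI[of _ m] exI[of _ "s0 + s"]) (auto intro: span_add)
  qed
  have cover: "\<exists>q. int_vec q \<and> q - p \<in> C" for p
  proof -
    obtain q m s where "int_vec q" "m \<in> M" "s \<in> span V" "q = p + m + s"
      using cyl_cover[OF flat F0 V M om W] by blast
    then show ?thesis unfolding C_def by (intro exI[of _ q]) auto
  qed
  obtain R where R: "\<And>m. m \<in> M \<Longrightarrow> norm m \<le> R" using compact_imp_bounded[OF Mc(1)] by (auto simp: bounded_iff)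
  define A where "A q = {t::real. q - t *\<^sub>R e \<in> C}" for q
  have Acl: "closed (A q)" for q
  proof -
    have "A q = (\<lambda>t. q - t *\<^sub>R e) -` C" unfolding A_def by auto
    then show ?thesis using Ccl by (auto intro!: continuous_closed_vimage continuous_intros)
  qed
  have Abd: "t \<le> (\<bar>z0 \<bullet> q\<bar> + norm z0 * R) / (z0 \<bullet> e)" if "t \<in> A q" for t q
  proof -
    from that obtain m s where ms: "q - t *\<^sub>R e = m + s" "m \<in> M" "s \<in> span V" unfolding A_def C_def by auto
    have "z0 \<bullet> (q - t *\<^sub>R e) = z0 \<bullet> m" using ms z0s[OF ms(3)] by (simp add: inner_add_right)
    then have "t * (z0 \<bullet> e) = z0 \<bullet> q - z0 \<bullet> m" by (simp add: inner_diff_right)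
    moreover have "\<bar>z0 \<bullet> m\<bar> \<le> norm z0 * R"
      using Cauchy_Schwarz_ineq2[of z0 m] R[OF ms(2)] mult_left_mono[of "norm m" R "norm z0"] by auto
    ultimately have "t * (z0 \<bullet> e) \<le> \<bar>z0 \<bullet> q\<bar> + norm z0 * R" by linarith
    then show ?thesis using z0e by (simp add: field_simps)
  qed
  have Ainv: "A q' = A q" if "q' - q \<in> span V" for q q'
  proof -
    have "q' - t *\<^sub>R e \<in> C \<longleftrightarrow> q - t *\<^sub>R e \<in> C" for t
    proof
      assume "q - t *\<^sub>R e \<in> C"
      from Csh[OF this that] show "q' - t *\<^sub>R e \<in> C" by simp
    next
      assume "q' - t *\<^sub>R e \<in> C"
      from Csh[OF this span_neg[OF that]] show "q - t *\<^sub>R e \<in> C" by simp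
    qed
    then show ?thesis unfolding A_def by auto
  qed
  obtain q0 where q0: "int_vec q0" "q0 \<in> C" using cover[of 0] by auto
  have A0n: "A q0 \<noteq> {}" using q0 unfolding A_def by (auto intro!: exI[of _ 0])
  have A0b: "bdd_above (A q0)" using Abd by (auto simp: bdd_above_def)
  define b where "b = Sup (A q0)"
  have bA: "b \<in> A q0" unfolding b_def using A0n A0b Acl by (rule closed_contains_Sup)
  have bmax: "t \<le> b" if "t \<in> A q0" for t unfolding b_def using that A0b by (rule cSup_upper)
  define Bd where "Bd = (\<bar>b\<bar> + 1) * norm e + R + (\<Sum>v\<in>V. norm v)"
  define Q where "Q = {q. int_vec q \<and> norm q \<le> Bd \<and> q - q0 \<notin> span V}"
  have fQ: "finite Q" unfolding Q_def by (rule finite_subset[OF _ finite_lattice_ball[of Bd]]) auto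
  define U where "U = (\<Union>q\<in>Q. A q)"
  have Ucl: "closed U" unfolding U_def using fQ Acl by auto
  have sub: "{b<..<b+1} \<subseteq> U"
  proof
    fix t assume t: "t \<in> {b<..<b+1}"
    obtain q where q: "int_vec q" "q - t *\<^sub>R e \<in> C" using cover[of "t *\<^sub>R e"] by auto
    then obtain m s where ms: "q - t *\<^sub>R e = m + s" "m \<in> M" "s \<in> span V" unfolding C_def by auto
    have "q - (t *\<^sub>R e + m) \<in> span V" using ms by (simp add: algebra_simps)
    then obtain q' where q': "int_vec q'" "q - q' \<in> zsp V" "norm (q' - (t *\<^sub>R e + m)) \<le> (\<Sum>v\<in>V. norm v)"
      using reduce_lattice[OF V q(1)] by blast
    have "norm q' \<le> norm (q' - (t *\<^sub>R e + m)) + norm (t *\<^sub>R e) + norm m"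
      using norm_triangle_ineq[of "q' - (t *\<^sub>R e + m)" "t *\<^sub>R e + m"] norm_triangle_ineq[of "t *\<^sub>R e" m] by simp
    moreover have "norm (t *\<^sub>R e) \<le> (\<bar>b\<bar> + 1) * norm e" using t by (auto intro!: mult_right_mono)
    ultimately have nq': "norm q' \<le> Bd" unfolding Bd_def using q'(3) R[OF ms(2)] by linarith
    have "q' - q \<in> span V" using span_neg[OF zsp_span[OF q'(2)]] by simp
    then have Aq': "A q' = A q" by (rule Ainv)
    have tq: "t \<in> A q" using q unfolding A_def by simp
    have "q' - q0 \<notin> span V"
    proof
      assume "q' - q0 \<in> span V"
      then have "A q' = A q0" by (rule Ainv)
      then have "t \<le> b" using tq Aq' bmax by auto
      then show False using t by auto
    qed
    then have "q' \<in> Q" unfolding Q_def using q' nq' by auto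
    then show "t \<in> U" unfolding U_def using tq Aq' by auto
  qed
  have "b \<in> closure {b<..<b+1}" by simp
  then have "b \<in> U" using closure_minimal[OF sub Ucl] by auto
  then obtain q1 where q1: "q1 \<in> Q" "b \<in> A q1" unfolding U_def by auto
  obtain m0 s0 where m0: "q0 - b *\<^sub>R e = m0 + s0" "m0 \<in> M" "s0 \<in> span V" using bA unfolding A_def C_def by auto
  obtain m1 s1 where m1: "q1 - b *\<^sub>R e = m1 + s1" "m1 \<in> M" "s1 \<in> span V" using q1(2) unfolding A_def C_def by auto
  have "m1 - m0 - (q1 - q0) = s0 - s1" using m0(1) m1(1) by (simp add: algebra_simps)
  then have "m1 - m0 - (q1 - q0) \<in> span V" using m0(3) m1(3) by (simp add: span_diff)
  moreover have "int_vec (q1 - q0)" using q1(1) q0(1) unfolding Q_def by (auto intro: int_vec_diff)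
  ultimately show ?thesis using q1(1) m0(2) m1(2) unfolding Q_def by blast
qed



lemma prim:
  fixes M :: "(real^'n) set"
  assumes V: "finite V" "\<forall>v\<in>V. int_vec v" and x: "int_vec x" "x \<notin> span V"
    and M: "convex M" and z: "z \<in> M" "z' \<in> M" "z' - z - x \<in> span V"
  shows "\<exists>x0 z1. int_vec x0 \<and> x0 \<notin> span V \<and> z1 \<in> M \<and> z1 - z - x0 \<in> span V \<and>
     (\<forall>y. int_vec y \<and> y \<in> span (insert x0 V) \<longrightarrow> (\<exists>j\<in>\<int>. y - j *\<^sub>R x0 \<in> span V))"
proof -
  define T where "T = {t::real. 0 < t \<and> t \<le> 1 \<and> (\<exists>y. int_vec y \<and> y - t *\<^sub>R x \<in> span V)}"
  have T1: "1 \<in> T" unfolding T_def using x by (auto intro!: exI[of _ x] span_0)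
  define Bd where "Bd = norm x + (\<Sum>v\<in>V. norm v)"
  define Fin where "Fin = {q::real^'n. int_vec q \<and> norm q \<le> Bd}"
  have fFin: "finite Fin" unfolding Fin_def by (rule finite_lattice_ball)
  have uniq: "t = t'" if "q - t *\<^sub>R x \<in> span V" "q - t' *\<^sub>R x \<in> span V" for q t t'
  proof (rule ccontr)
    assume ne: "t \<noteq> t'"
    have "(q - t *\<^sub>R x) - (q - t' *\<^sub>R x) \<in> span V" using that by (rule span_diff)
    then have "(t' - t) *\<^sub>R x \<in> span V" by (simp add: algebra_simps)
    then have "(1 / (t' - t)) *\<^sub>R ((t' - t) *\<^sub>R x) \<in> span V" by (rule span_mul)
    then show False using ne x(2) by simp
  qed
  have fin1: "finite {t. q - t *\<^sub>R x \<in> span V}" for q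
  proof (cases "{t. q - t *\<^sub>R x \<in> span V} = {}")
    case False
    then obtain t0 where "q - t0 *\<^sub>R x \<in> span V" by auto
    then have "{t. q - t *\<^sub>R x \<in> span V} \<subseteq> {t0}" using uniq by auto
    then show ?thesis by (rule finite_subset) simp
  qed simp
  have "T \<subseteq> (\<Union>q\<in>Fin. {t. q - t *\<^sub>R x \<in> span V})"
  proof
    fix t assume t: "t \<in> T"
    then obtain y where y: "int_vec y" "y - t *\<^sub>R x \<in> span V" "0 < t" "t \<le> 1" unfolding T_def by auto
    then obtain q where q: "int_vec q" "y - q \<in> zsp V" "norm (q - t *\<^sub>R x) \<le> (\<Sum>v\<in>V. norm v)"
      using reduce_lattice[OF V y(1) y(2)] by blast
    have "norm q \<le> norm (q - t *\<^sub>R x) + norm (t *\<^sub>R x)"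
      using norm_triangle_ineq[of "q - t *\<^sub>R x" "t *\<^sub>R x"] by simp
    moreover have "norm (t *\<^sub>R x) \<le> norm x" using y(3,4) by (simp add: mult_left_le_one_le)
    ultimately have "q \<in> Fin" unfolding Fin_def Bd_def using q by auto
    moreover have "q - t *\<^sub>R x \<in> span V" using span_diff[OF y(2) zsp_span[OF q(2)]] by simp
    ultimately show "t \<in> (\<Union>q\<in>Fin. {t. q - t *\<^sub>R x \<in> span V})" by auto
  qed
  then have fT: "finite T" using fFin fin1 by (meson finite_UN_I finite_subset)
  define t0 where "t0 = Min T"
  have t0T: "t0 \<in> T" unfolding t0_def using fT T1 by (auto intro: Min_in)
  have t0min: "t0 \<le> t" if "t \<in> T" for t unfolding t0_def using fT that by simp
  obtain y0 where y0: "int_vec y0" "y0 - t0 *\<^sub>R x \<in> span V" "0 < t0" "t0 \<le> 1" using t0T unfolding T_def by auto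
  define z1 where "z1 = (1 - t0) *\<^sub>R z + t0 *\<^sub>R z'"
  have z1M: "z1 \<in> M" unfolding z1_def using y0 z by (intro convexD[OF M]) auto
  have eqz: "z1 - z - y0 = t0 *\<^sub>R (z' - z - x) - (y0 - t0 *\<^sub>R x)" unfolding z1_def by (simp add: algebra_simps)
  have z1V: "z1 - z - y0 \<in> span V" unfolding eqz by (rule span_diff[OF span_mul[OF z(3)] y0(2)])
  have y0V: "y0 \<notin> span V"
  proof
    assume "y0 \<in> span V"
    then have "y0 - (y0 - t0 *\<^sub>R x) \<in> span V" using y0(2) by (rule span_diff)
    then have "t0 *\<^sub>R x \<in> span V" by simp
    then have "(1/t0) *\<^sub>R (t0 *\<^sub>R x) \<in> span V" by (rule span_mul)
    then show False using y0(3) x(2) by simp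
  qed
  have pr: "\<exists>j\<in>\<int>. y - j *\<^sub>R y0 \<in> span V" if yi: "int_vec y" "y \<in> span (insert y0 V)" for y
  proof -
    obtain k where k: "y - k *\<^sub>R y0 \<in> span V" using yi(2) span_breakdown_eq by blast
    define j where "j = real_of_int \<lfloor>k\<rfloor>"
    define \<delta> where "\<delta> = k - j"
    have d01: "0 \<le> \<delta>" "\<delta> < 1" unfolding \<delta>_def j_def by linarith+
    show ?thesis
    proof (cases "\<delta> = 0")
      case True
      then have "k = j" unfolding \<delta>_def by simp
      moreover have "j \<in> \<int>" unfolding j_def by simp
      ultimately show ?thesis using k by auto
    next
      case False
      then have dpos: "0 < \<delta>" using d01 by auto
      have iyy: "int_vec (y - j *\<^sub>R y0)" using yi(1) y0(1) by (intro int_vec_diff int_vec_scale) (auto simp: j_def)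
      have eqd: "(y - j *\<^sub>R y0) - (\<delta> * t0) *\<^sub>R x = (y - k *\<^sub>R y0) + \<delta> *\<^sub>R (y0 - t0 *\<^sub>R x)"
        unfolding \<delta>_def by (simp add: algebra_simps)
      have "(y - j *\<^sub>R y0) - (\<delta> * t0) *\<^sub>R x \<in> span V" unfolding eqd by (rule span_add[OF k span_mul[OF y0(2)]])
      moreover have "0 < \<delta> * t0" "\<delta> * t0 \<le> 1" using dpos d01 y0(3,4)
        by (auto simp: mult_pos_pos) (smt (verit) mult_le_one)
      ultimately have "\<delta> * t0 \<in> T" unfolding T_def using iyy by blast
      then have "t0 \<le> \<delta> * t0" by (rule t0min)
      moreover have "\<delta> * t0 < t0" using d01 y0(3) by simp
      ultimately show ?thesis by linarith
    qed
  qed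
  show ?thesis using y0(1) y0V z1M z1V pr by blast
qed



lemma convex_body_scale: "convex_body L \<Longrightarrow> convex_body ((\<lambda>x. c *\<^sub>R x) ` L)"
  unfolding convex_body_def by (auto intro: compact_scaling convex_scaling)

lemma sum_in_convex: "convex L \<Longrightarrow> 0 \<le> a \<Longrightarrow> a \<le> 1 \<Longrightarrow> p \<in> (\<lambda>x. (1 - a) *\<^sub>R x) ` L \<Longrightarrow> q \<in> (\<lambda>x. a *\<^sub>R x) ` L \<Longrightarrow> p + q \<in> L"
  by (auto intro: convexD)

lemma main_ind:
  fixes L :: "(real^'n) set"
  assumes flat: "flat F TYPE('n)" and F0: "F \<ge> 0"
  shows "finite V \<Longrightarrow> (\<forall>v\<in>V. int_vec v) \<Longrightarrow> dim V + r = CARD('n) \<Longrightarrow>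
    (\<forall>y. int_vec y \<and> y \<in> span V \<longrightarrow> y \<in> zsp V) \<Longrightarrow> convex_body L \<Longrightarrow>
    (0 < r \<Longrightarrow> \<exists>\<omega>. \<omega> > real r * F \<and> (\<forall>u. int_vec u \<and> u \<noteq> 0 \<and> (\<forall>v\<in>V. u \<bullet> v = 0) \<longrightarrow> \<omega> \<le> wid u L)) \<Longrightarrow>
    \<exists>p0\<in>L. \<exists>W. finite W \<and> card W \<le> r \<and> (\<forall>w\<in>W. int_vec w \<and> (\<exists>s\<in>span V. p0 + w + s \<in> L)) \<and>
       (\<forall>y. int_vec y \<longrightarrow> y \<in> zsp (V \<union> W))"
proof (induction r arbitrary: V L)
  case 0
  have "span V = UNIV" using 0(3) dim_eq_full[of V] by simp
  then have "\<forall>y. int_vec y \<longrightarrow> y \<in> zsp (V \<union> {})" using 0(4) by auto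
  moreover obtain p0 where "p0 \<in> L" using 0(5) by (auto simp: convex_body_def)
  ultimately show ?case by (intro bexI[of _ p0] exI[of _ "{}"]) auto
next
  case (Suc r)
  note V = Suc.prems(1,2)
  obtain \<omega> where om: "\<omega> > real (Suc r) * F" and
    Wd: "\<And>u. int_vec u \<Longrightarrow> u \<noteq> 0 \<Longrightarrow> (\<forall>v\<in>V. u \<bullet> v = 0) \<Longrightarrow> \<omega> \<le> wid u L" using Suc.prems(6) by auto
  have Lc: "compact L" "convex L" "L \<noteq> {}" using Suc.prems(5) by (auto simp: convex_body_def)
  have rF: "real r * F \<ge> 0" using F0 by simp
  have PF: "real (Suc r) * F = real r * F + F" by (simp add: algebra_simps)
  define P where "P = real (Suc r) * F"
  have FP: "F \<le> P" unfolding P_def using F0 rF by (simp add: algebra_simps)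
  have omP: "P < \<omega>" using om unfolding P_def .
  have om0: "\<omega> > 0" using omP FP F0 by linarith
  define \<delta> where "\<delta> = (\<omega> - P) / 2"
  have d0: "\<delta> > 0" using omP unfolding \<delta>_def by simp
  define \<alpha> where "\<alpha> = (F + \<delta>) / \<omega>"
  have a0: "0 < \<alpha>" unfolding \<alpha>_def using d0 F0 om0 by simp
  have "F + \<delta> < \<omega>" using omP FP unfolding \<delta>_def by argo
  then have a1: "\<alpha> < 1" unfolding \<alpha>_def using om0 by simp
  have aom: "\<alpha> * \<omega> = F + \<delta>" unfolding \<alpha>_def using om0 by simp
  define M where "M = (\<lambda>x. \<alpha> *\<^sub>R x) ` L"
  have Mb: "convex_body M" unfolding M_def by (rule convex_body_scale[OF Suc.prems(5)])
  have WM: "F + \<delta> \<le> wid u M" if "int_vec u" "u \<noteq> 0" "\<forall>v\<in>V. u \<bullet> v = 0" for u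
  proof -
    have "\<alpha> * \<omega> \<le> \<alpha> * wid u L" using Wd[OF that] a0 by simp
    also have "\<dots> \<le> wid u M" unfolding M_def using Lc a0 by (intro wid_scale) (auto simp: compact_imp_bounded)
    finally show ?thesis using aom by simp
  qed
  have SV: "span V \<noteq> UNIV" using Suc.prems(3) dim_eq_full[of V] by auto
  obtain x z z' where xz: "int_vec x" "x \<notin> span V" "z \<in> M" "z' \<in> M" "z' - z - x \<in> span V"
    using chord[OF flat F0 V SV Mb _ WM] d0 by fastforce
  have Mcv: "convex M" using Mb by (simp add: convex_body_def)
  obtain x0 z1 where x0: "int_vec x0" "x0 \<notin> span V" "z1 \<in> M" "z1 - z - x0 \<in> span V"
    and pr: "\<forall>y. int_vec y \<and> y \<in> span (insert x0 V) \<longrightarrow> (\<exists>j\<in>\<int>. y - j *\<^sub>R x0 \<in> span V)"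
    using prim[OF V xz(1,2) Mcv xz(3,4,5)] by blast
  define V' where "V' = insert x0 V"
  have V'1: "finite V'" "\<forall>v\<in>V'. int_vec v" using V x0 unfolding V'_def by auto
  have V'2: "dim V' + r = CARD('n)" using Suc.prems(3) x0(2) unfolding V'_def by (simp add: dim_insert)
  have V'3: "\<forall>y. int_vec y \<and> y \<in> span V' \<longrightarrow> y \<in> zsp V'"
  proof (intro allI impI)
    fix y assume y: "int_vec y \<and> y \<in> span V'"
    then obtain j where j: "j \<in> \<int>" "y - j *\<^sub>R x0 \<in> span V" using pr unfolding V'_def by blast
    have "int_vec (y - j *\<^sub>R x0)" using y j x0 by (intro int_vec_diff int_vec_scale) auto
    then have "y - j *\<^sub>R x0 \<in> zsp V" using Suc.prems(4) j by auto
    then have "y - j *\<^sub>R x0 \<in> zsp V'" by (rule zsp_mono) (auto simp: V'_def)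
    moreover have "j *\<^sub>R x0 \<in> zsp V'" by (intro zsp_int j zspB) (simp add: V'_def)
    ultimately have "(y - j *\<^sub>R x0) + j *\<^sub>R x0 \<in> zsp V'" by (rule zsp_add)
    then show "y \<in> zsp V'" by simp
  qed
  define L' where "L' = (\<lambda>x. (1 - \<alpha>) *\<^sub>R x) ` L"
  have L'b: "convex_body L'" unfolding L'_def by (rule convex_body_scale[OF Suc.prems(5)])
  have L'w: "\<exists>\<omega>. \<omega> > real r * F \<and> (\<forall>u. int_vec u \<and> u \<noteq> 0 \<and> (\<forall>v\<in>V'. u \<bullet> v = 0) \<longrightarrow> \<omega> \<le> wid u L')"
  proof (intro exI[of _ "(1 - \<alpha>) * \<omega>"] conjI allI impI)
    have "(1 - \<alpha>) * \<omega> = \<omega> - F - \<delta>" using aom by (simp add: algebra_simps)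
    also have "\<dots> = real r * F + \<delta>" unfolding \<delta>_def using PF unfolding P_def by (simp add: algebra_simps)
    finally show "(1 - \<alpha>) * \<omega> > real r * F" using d0 by simp
  next
    fix u assume u: "int_vec u \<and> u \<noteq> 0 \<and> (\<forall>v\<in>V'. u \<bullet> v = 0)"
    then have "\<omega> \<le> wid u L" using Wd unfolding V'_def by auto
    then have "(1 - \<alpha>) * \<omega> \<le> (1 - \<alpha>) * wid u L" using a1 by simp
    also have "\<dots> \<le> wid u L'" unfolding L'_def using Lc a1 by (intro wid_scale) (auto simp: compact_imp_bounded)
    finally show "(1 - \<alpha>) * \<omega> \<le> wid u L'" .
  qed
  obtain p0' W' where p0': "p0' \<in> L'" "finite W'" "card W' \<le> r"
    and W'1: "\<forall>w\<in>W'. int_vec w \<and> (\<exists>s\<in>span V'. p0' + w + s \<in> L')"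
    and W'2: "\<forall>y. int_vec y \<longrightarrow> y \<in> zsp (V' \<union> W')"
    using Suc.IH[OF V'1 V'2 V'3 L'b] L'w by blast
  have sumL: "a + b \<in> L" if "a \<in> L'" "b \<in> M" for a b
    using sum_in_convex[OF Lc(2), of \<alpha> a b] that a0 a1 unfolding L'_def M_def by auto
  define p0 where "p0 = p0' + z"
  have "\<forall>w\<in>W'. \<exists>k. k \<in> \<int> \<and> (\<exists>s\<in>span V. p0 + (w + k *\<^sub>R x0) + s \<in> L)"
  proof
    fix w assume w: "w \<in> W'"
    then obtain s where s: "s \<in> span V'" "p0' + w + s \<in> L'" using W'1 by auto
    obtain t where t: "s - t *\<^sub>R x0 \<in> span V" using s(1) span_breakdown_eq unfolding V'_def by blast
    define \<theta> where "\<theta> = of_int \<lceil>t\<rceil> - t"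
    have th: "0 \<le> \<theta>" "\<theta> \<le> 1" unfolding \<theta>_def by linarith+
    have zt: "(1 - \<theta>) *\<^sub>R z + \<theta> *\<^sub>R z1 \<in> M" using th xz(3) x0(3) by (intro convexD[OF Mcv]) auto
    have inL: "(p0' + w + s) + ((1 - \<theta>) *\<^sub>R z + \<theta> *\<^sub>R z1) \<in> L" by (rule sumL[OF s(2) zt])
    have eq: "(p0' + w + s) + ((1 - \<theta>) *\<^sub>R z + \<theta> *\<^sub>R z1) =
       p0 + (w + of_int \<lceil>t\<rceil> *\<^sub>R x0) + ((s - t *\<^sub>R x0) + \<theta> *\<^sub>R (z1 - z - x0))"
      unfolding p0_def \<theta>_def by (simp add: algebra_simps)
    have "(s - t *\<^sub>R x0) + \<theta> *\<^sub>R (z1 - z - x0) \<in> span V" by (rule span_add[OF t span_mul[OF x0(4)]])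
    then show "\<exists>k. k \<in> \<int> \<and> (\<exists>s\<in>span V. p0 + (w + k *\<^sub>R x0) + s \<in> L)"
      using inL unfolding eq by (intro exI[of _ "of_int \<lceil>t\<rceil>"]) auto
  qed
  then obtain kf where kf: "\<forall>w\<in>W'. kf w \<in> \<int> \<and> (\<exists>s\<in>span V. p0 + (w + kf w *\<^sub>R x0) + s \<in> L)"
    by metis
  define W where "W = insert x0 ((\<lambda>w. w + kf w *\<^sub>R x0) ` W')"
  have p0L: "p0 \<in> L" unfolding p0_def using sumL[OF p0'(1) xz(3)] .
  have fW: "finite W" unfolding W_def using p0' by simp
  have cW: "card W \<le> Suc r"
  proof -
    have "card W \<le> Suc (card ((\<lambda>w. w + kf w *\<^sub>R x0) ` W'))" unfolding W_def by (rule card_insert_le_m1) auto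
    also have "\<dots> \<le> Suc (card W')" using card_image_le[OF p0'(2)] by simp
    finally show ?thesis using p0'(3) by simp
  qed
  have W1: "\<forall>w\<in>W. int_vec w \<and> (\<exists>s\<in>span V. p0 + w + s \<in> L)"
  proof
    fix w assume "w \<in> W"
    then consider "w = x0" | w' where "w' \<in> W'" "w = w' + kf w' *\<^sub>R x0" unfolding W_def by auto
    then show "int_vec w \<and> (\<exists>s\<in>span V. p0 + w + s \<in> L)"
    proof cases
      case 1
      have e1: "p0 + x0 + (z1 - z - x0) = p0' + z1" unfolding p0_def by simp
      have "p0 + x0 + (z1 - z - x0) \<in> L" unfolding e1 using sumL[OF p0'(1) x0(3)] .
      then show ?thesis using 1 x0 by blast
    next
      case 2
      then show ?thesis using kf W'1 by (auto intro!: int_vec_add int_vec_scale x0(1))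
    qed
  qed
  have W2: "\<forall>y. int_vec y \<longrightarrow> y \<in> zsp (V \<union> W)"
  proof (intro allI impI)
    fix y :: "real^'n" assume "int_vec y"
    then have y: "y \<in> zsp (V' \<union> W')" using W'2 by auto
    have x0z: "x0 \<in> zsp (V \<union> W)" by (intro zspB) (simp add: W_def)
    have "V' \<union> W' \<subseteq> zsp (V \<union> W)"
    proof
      fix v assume "v \<in> V' \<union> W'"
      then consider "v = x0" | "v \<in> V" | "v \<in> W'" unfolding V'_def by auto
      then show "v \<in> zsp (V \<union> W)"
      proof cases
        case 3
        have a: "v + kf v *\<^sub>R x0 \<in> zsp (V \<union> W)" using 3 by (intro zspB) (simp add: W_def)
        have b: "kf v *\<^sub>R x0 \<in> zsp (V \<union> W)" using 3 kf by (intro zsp_int x0z) auto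
        show ?thesis using zspD[OF a b] by simp
      qed (use x0z in \<open>auto intro: zspB\<close>)
    qed
    then show "y \<in> zsp (V \<union> W)" by (rule zsp_trans[OF y])
  qed
  show ?case using p0L fW cW W1 W2 by blast
qed



lemma det_Ints: "(\<forall>i j. A $ i $ j \<in> \<int>) \<Longrightarrow> det (A::real^'n^'n) \<in> \<int>"
  unfolding det_def by (intro Ints_sum Ints_mult Ints_prod) auto

lemma Ints_mult_1: "(a::real) \<in> \<int> \<Longrightarrow> b \<in> \<int> \<Longrightarrow> a * b = 1 \<Longrightarrow> a = 1 \<or> a = -1"
proof -
  assume "a \<in> \<int>" "b \<in> \<int>" "a * b = 1"
  then obtain ka kb where "a = of_int ka" "b = of_int kb" by (auto elim!: Ints_cases)
  with \<open>a * b = 1\<close> have "ka * kb = 1" by (metis of_int_eq_1_iff of_int_mult)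
  then have "ka = 1 \<or> ka = -1" using zmult_eq_1_iff by blast
  then show ?thesis using \<open>a = of_int ka\<close> by auto
qed

lemma matvec_int: "(\<forall>i j. A $ i $ j \<in> \<int>) \<Longrightarrow> int_vec x \<Longrightarrow> int_vec ((A::real^'n^'n) *v x)"
  unfolding int_vec_def matrix_vector_mult_def by (auto intro!: Ints_sum Ints_mult)

lemma matmat_int: "(\<forall>i j. A $ i $ j \<in> \<int>) \<Longrightarrow> (\<forall>i j. B $ i $ j \<in> \<int>) \<Longrightarrow> \<forall>i j. ((A::real^'n^'n) ** B) $ i $ j \<in> \<int>"
  unfolding matrix_matrix_mult_def by (auto intro!: Ints_sum Ints_mult)

lemma unimod_of_inverse:
  assumes A: "\<forall>i j. A $ i $ j \<in> \<int>" and C: "\<forall>i j. C $ i $ j \<in> \<int>" and AC: "(A::real^'n^'n) ** C = mat 1"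
  shows "unimodular_matrix A" "det C = 1 \<or> det C = -1"
proof -
  have "det A * det C = 1" using AC by (metis det_I det_mul)
  then show "unimodular_matrix A" "det C = 1 \<or> det C = -1" unfolding unimodular_matrix_def
    using A Ints_mult_1[OF det_Ints[OF A] det_Ints[OF C]] Ints_mult_1[OF det_Ints[OF C] det_Ints[OF A]]
    by (auto simp: mult.commute)
qed

lemma int_inverse_exists:
  assumes "unimodular_matrix (A::real^'n^'n)"
  shows "\<exists>C. (\<forall>i j. C $ i $ j \<in> \<int>) \<and> A ** C = mat 1 \<and> C ** A = mat 1"
proof -
  have A: "\<forall>i j. A $ i $ j \<in> \<int>" and dA: "det A = 1 \<or> det A = -1" using assms by (auto simp: unimodular_matrix_def)
  have dA0: "det A \<noteq> 0" using dA by auto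
  define C where "C = (\<chi> j k. det (\<chi> i j'. if j' = j then axis k 1 $ i else A $ i $ j') / det A :: real^'n^'n)"
  have col: "A *v (\<chi> j. C $ j $ k) = axis k 1" for k
    using cramer[OF dA0, of "\<chi> j. C $ j $ k" "axis k 1"] unfolding C_def by simp
  have Ci: "\<forall>i j. C $ i $ j \<in> \<int>"
  proof (intro allI)
    fix j k
    have "det (\<chi> i j'. if j' = j then axis k 1 $ i else A $ i $ j') \<in> \<int>"
      using A by (intro det_Ints) (auto simp: axis_def)
    then show "C $ j $ k \<in> \<int>" unfolding C_def using dA by auto
  qed
  have "A ** C = mat 1"
  proof -
    have "(A ** C) $ i $ k = mat 1 $ i $ k" for i k
    proof -
      have "(A ** C) $ i $ k = (A *v (\<chi> j. C $ j $ k)) $ i"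
        by (simp add: matrix_matrix_mult_def matrix_vector_mult_def)
      also have "\<dots> = axis k 1 $ i" using col by simp
      finally show ?thesis by (simp add: mat_def axis_def)
    qed
    then show ?thesis by (simp add: vec_eq_iff)
  qed
  then show ?thesis using Ci matrix_left_right_inverse by blast
qed

lemma zsp_matrix:
  assumes "x \<in> zsp (range g)"
  shows "\<exists>c. int_vec c \<and> x = (\<chi> i j. g j $ i :: real^'n^'n) *v c"
  using assms
proof (induction rule: zsp.induct)
  case zsp0
  then show ?case by (intro exI[of _ 0]) (auto simp: int_vec_zero)
next
  case (zspB b)
  then obtain j where "b = g j" by auto
  moreover have "(\<chi> i j. g j $ i :: real^'n^'n) *v axis j 1 = g j"
    by (simp add: matrix_vector_mult_basis column_def)
  ultimately show ?case by (intro exI[of _ "axis j 1"]) (auto simp: int_vec_axis)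
next
  case (zspD x y)
  then obtain c1 c2 where "int_vec c1" "x = (\<chi> i j. g j $ i :: real^'n^'n) *v c1"
    "int_vec c2" "y = (\<chi> i j. g j $ i :: real^'n^'n) *v c2" by blast
  then show ?case by (intro exI[of _ "c1 - c2"]) (auto simp: int_vec_diff matrix_vector_mult_diff_distrib)
qed



lemma simplex_in:
  fixes L :: "(real^'n) set"
  assumes flat: "flat F TYPE('n)" and F0: "F \<ge> 0" and L: "convex_body L"
    and w: "lattice_width L > real CARD('n) * F"
  shows "\<exists>A p. unimodular_matrix A \<and> (\<forall>y\<in>std_simplex. A *v y + p \<in> L)"
proof -
  have Lc: "compact L" "convex L" "L \<noteq> {}" using L by (auto simp: convex_body_def)
  have hw: "0 < CARD('n) \<Longrightarrow> \<exists>\<omega>. \<omega> > real CARD('n) * F \<and>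
      (\<forall>u. int_vec u \<and> u \<noteq> 0 \<and> (\<forall>v\<in>({}::(real^'n) set). u \<bullet> v = 0) \<longrightarrow> \<omega> \<le> wid u L)"
    using w Lc by (intro exI[of _ "lattice_width L"]) (auto intro!: lattice_width_le_wid compact_imp_bounded)
  have sat: "\<forall>y::real^'n. int_vec y \<and> y \<in> span {} \<longrightarrow> y \<in> zsp {}" by (auto intro: zsp0)
  obtain p0 W where p0: "p0 \<in> L" and fW: "finite W" and cW: "card W \<le> CARD('n)"
    and W1: "\<forall>w\<in>W. int_vec w \<and> (\<exists>s\<in>span {}. p0 + w + s \<in> L)"
    and W2: "\<forall>y::real^'n. int_vec y \<longrightarrow> y \<in> zsp ({} \<union> W)"
    using main_ind[OF flat F0, of "{}" "CARD('n)" L] hw sat L by auto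
  have W1': "p0 + w \<in> L" "int_vec w" if "w \<in> W" for w using W1 that by auto
  have "Basis \<subseteq> span W"
  proof
    fix b :: "real^'n" assume "b \<in> Basis"
    then obtain i where "b = axis i 1" by (auto simp: Basis_vec_def)
    then have "b \<in> zsp W" using W2 int_vec_axis by auto
    then show "b \<in> span W" by (rule zsp_span)
  qed
  then have "UNIV \<subseteq> span W" by (metis span_Basis span_minimal subspace_span top.extremum_uniqueI)
  then have "dim (UNIV::(real^'n) set) \<le> card W" using fW by (rule dim_le_card)
  then have "card W = CARD('n)" using cW by (simp add: dim_UNIV)
  then obtain g where g: "bij_betw g (UNIV::'n set) W"
    using finite_same_card_bij[of "UNIV::'n set" W] fW by auto
  define A where "A = (\<chi> i j. g j $ i :: real^'n^'n)"
  have rg: "range g = W" using g by (simp add: bij_betw_def)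
  have Ag: "A *v axis j 1 = g j" for j unfolding A_def by (simp add: matrix_vector_mult_basis column_def)
  have Ai: "\<forall>i j. A $ i $ j \<in> \<int>" unfolding A_def using W1' rg by (auto simp: int_vec_def)
  have "\<exists>c. int_vec c \<and> axis k 1 = A *v c" for k
    unfolding A_def using W2 rg int_vec_axis by (intro zsp_matrix) auto
  then obtain cf where cf: "\<And>k. int_vec (cf k) \<and> axis k 1 = A *v cf k" by metis
  define C where "C = (\<chi> j k. cf k $ j :: real^'n^'n)"
  have Ci: "\<forall>i j. C $ i $ j \<in> \<int>" unfolding C_def using cf by (auto simp: int_vec_def)
  have AC: "A ** C = mat 1"
  proof -
    have "(A ** C) $ i $ k = mat 1 $ i $ k" for i k
    proof -
      have "(A ** C) $ i $ k = (A *v cf k) $ i"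
        by (simp add: matrix_matrix_mult_def matrix_vector_mult_def C_def)
      also have "\<dots> = axis k 1 $ i" using cf[of k] by simp
      finally show ?thesis by (simp add: mat_def axis_def)
    qed
    then show ?thesis by (simp add: vec_eq_iff)
  qed
  have uA: "unimodular_matrix A" using unimod_of_inverse[OF Ai Ci AC] by simp
  define S where "S = insert (0::real^'n) {axis i 1 | i. True}"
  have img: "(\<lambda>y. A *v y + p0) ` std_simplex = convex hull ((+) p0 ` (*v) A ` S)"
  proof -
    have "(\<lambda>y. A *v y + p0) ` std_simplex = (+) p0 ` ((*v) A ` (convex hull S))"
      unfolding std_simplex_def S_def by (auto simp: image_image add.commute)
    also have "\<dots> = (+) p0 ` (convex hull ((*v) A ` S))"
      by (simp add: convex_hull_linear_image matrix_vector_mul_linear)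
    also have "\<dots> = convex hull ((+) p0 ` (*v) A ` S)" by (simp add: convex_hull_translation)
    finally show ?thesis .
  qed
  have "(+) p0 ` (*v) A ` S \<subseteq> L"
  proof
    fix x assume "x \<in> (+) p0 ` (*v) A ` S"
    then consider "x = p0" | i where "x = p0 + A *v axis i 1" unfolding S_def by auto
    then show "x \<in> L"
    proof cases
      case 1 then show ?thesis using p0 by simp
    next
      case 2
      have "g i \<in> W" using rg by auto
      then show ?thesis using 2 Ag W1' by simp
    qed
  qed
  then have "convex hull ((+) p0 ` (*v) A ` S) \<subseteq> L" using Lc(2) by (rule hull_minimal)
  then have "\<forall>y\<in>std_simplex. A *v y + p0 \<in> L" using img by blast
  then show ?thesis using uA by blast
qed



lemma scale_lw:
  fixes K :: "(real^'n) set"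
  assumes K: "convex_body K" and c: "c > 0"
  shows "c * lattice_width K \<le> lattice_width ((\<lambda>x. c *\<^sub>R x) ` K)"
proof (rule lattice_width_ge)
  fix u :: "real^'n" assume u: "int_vec u" "u \<noteq> 0"
  have Kc: "bounded K" "K \<noteq> {}" using K by (auto simp: convex_body_def compact_imp_bounded)
  have "c * lattice_width K \<le> c * wid u K" using lattice_width_le_wid[OF Kc u] c by simp
  also have "\<dots> \<le> wid u ((\<lambda>x. c *\<^sub>R x) ` K)" by (rule wid_scale[OF Kc c])
  finally show "c * lattice_width K \<le> wid u ((\<lambda>x. c *\<^sub>R x) ` K)" .
qed

lemma R_copy:
  fixes K :: "(real^'n) set"
  assumes flat: "flat F TYPE('n)" and F0: "F \<ge> 0" and n: "n \<ge> 1" and K: "convex_body K"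
    and w: "lattice_width K > real n * real CARD('n) * F"
  shows "\<exists>A p. unimodular_matrix A \<and> (\<forall>y\<in>std_simplex. A *v (real n *\<^sub>R y) + p \<in> K)"
proof -
  define L where "L = (\<lambda>x. (1 / real n) *\<^sub>R x) ` K"
  have Lb: "convex_body L" unfolding L_def by (rule convex_body_scale[OF K])
  have np: "real n > 0" using n by simp
  have "real CARD('n) * F < (1 / real n) * lattice_width K"
    using w np by (simp add: field_simps)
  also have "\<dots> \<le> lattice_width L" unfolding L_def by (rule scale_lw[OF K]) (use np in simp)
  finally obtain A p where A: "unimodular_matrix A" and Ap: "\<forall>y\<in>std_simplex. A *v y + p \<in> L"
    using simplex_in[OF flat F0 Lb] by blast
  have "A *v (real n *\<^sub>R y) + real n *\<^sub>R p \<in> K" if yS: "y \<in> std_simplex" for y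
  proof -
    obtain k where k: "k \<in> K" "A *v y + p = (1 / real n) *\<^sub>R k" using Ap yS unfolding L_def by auto
    have "A *v (real n *\<^sub>R y) + real n *\<^sub>R p = real n *\<^sub>R (A *v y + p)"
      by (simp add: matrix_vector_mult_scaleR scaleR_add_right)
    also have "\<dots> = k" using k np by simp
    finally show ?thesis using k by simp
  qed
  then show ?thesis using A by blast
qed

lemma copy_X:
  fixes X :: "(real^'n) set"
  assumes A0: "unimodular_matrix A0" and X: "X \<subseteq> (\<lambda>y. A0 *v y + b0) ` ((\<lambda>x. c *\<^sub>R x) ` std_simplex)"
    and A: "unimodular_matrix A" and AK: "\<forall>y\<in>std_simplex. A *v (c *\<^sub>R y) + p \<in> K"
  shows "\<exists>B. unimodular_matrix B \<and> (\<forall>i j. B $ i $ j \<in> \<int>) \<and> (\<lambda>x. B *v x + (p - B *v b0)) ` X \<subseteq> K"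
proof -
  obtain C where Ci: "\<forall>i j. C $ i $ j \<in> \<int>" and AC: "A0 ** C = mat 1" and CA: "C ** A0 = mat 1"
    using int_inverse_exists[OF A0] by blast
  have Ai: "\<forall>i j. A $ i $ j \<in> \<int>" and dA: "det A = 1 \<or> det A = -1" using A by (auto simp: unimodular_matrix_def)
  have A0i: "\<forall>i j. A0 $ i $ j \<in> \<int>" using A0 by (auto simp: unimodular_matrix_def)
  have dC: "det C = 1 \<or> det C = -1" using unimod_of_inverse[OF A0i Ci AC] by simp
  define B where "B = A ** C"
  have Bi: "\<forall>i j. B $ i $ j \<in> \<int>" unfolding B_def by (rule matmat_int[OF Ai Ci])
  have "det B = 1 \<or> det B = -1" unfolding B_def using dA dC by (auto simp: det_mul)
  then have uB: "unimodular_matrix B" using Bi by (simp add: unimodular_matrix_def)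
  have "B *v x + (p - B *v b0) \<in> K" if xX: "x \<in> X" for x
  proof -
    obtain y where y: "y \<in> std_simplex" "x = A0 *v (c *\<^sub>R y) + b0" using X xX by auto
    have "B *v x + (p - B *v b0) = A *v ((C ** A0) *v (c *\<^sub>R y)) + p"
      unfolding y(2) B_def by (simp add: matrix_vector_mult_add_rdistrib matrix_vector_mul_assoc[symmetric] algebra_simps)
    also have "\<dots> = A *v (c *\<^sub>R y) + p" using CA by simp
    finally have eq: "B *v x + (p - B *v b0) = A *v (c *\<^sub>R y) + p" .
    show ?thesis unfolding eq using AK y(1) by blast
  qed
  then show ?thesis using uB Bi by blast
qed



lemma half_not_int: "(1/2::real) \<notin> \<int>"
proof
  assume "(1/2::real) \<in> \<int>"
  then obtain k where "(1/2::real) = of_int k" by (auto elim: Ints_cases)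
  then have "2 * k = 1" by linarith
  then show False by presburger
qed

lemma Flt_nonneg: "Flt TYPE('n::finite) \<ge> 0"
proof -
  define c where "c = (\<chi> i. 1/2 :: real^'n)"
  have cb: "convex_body {c}" by (simp add: convex_body_def)
  have ni: "\<forall>x\<in>{c}. \<not> int_vec x" unfolding c_def int_vec_def using half_not_int by auto
  have "0 \<le> lattice_width {c}"
    by (rule lattice_width_ge) (auto intro: wid_nonneg)
  then have z: "(0::ereal) \<le> ereal (lattice_width {c})" by simp
  have "ereal (lattice_width {c}) \<le> Flt TYPE('n)"
    unfolding Flt_def by (rule Sup_upper) (use cb ni in blast)
  with z show ?thesis by (rule order_trans)
qed

lemma flat_of_Flt: "Flt TYPE('n::finite) = ereal F \<Longrightarrow> flat F TYPE('n)"
  unfolding flat_def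
proof (intro allI impI)
  fix K :: "(real^'n) set"
  assume FF: "Flt TYPE('n) = ereal F" and K: "convex_body K \<and> F < lattice_width K"
  show "\<exists>x\<in>K. int_vec x"
  proof (rule ccontr)
    assume "\<not> (\<exists>x\<in>K. int_vec x)"
    then have "ereal (lattice_width K) \<le> Flt TYPE('n)"
      unfolding Flt_def using K by (intro Sup_upper) blast
    then show False using FF K by simp
  qed
qed

theorem mainTheorem7:
  fixes X :: "(real^'n) set" and n :: nat
  assumes "n \<ge> 1"
    and "bounded X"
    and "\<exists>Z. unimodular_copy ((\<lambda>x. real n *\<^sub>R x) ` std_simplex) Z \<and> X \<subseteq> Z"
  shows "Flt_X X \<le> ereal (2 * real n * real CARD('n)) * Flt TYPE('n)
     \<and> FltR_X X \<le> ereal (real n * real CARD('n)) * Flt TYPE('n)"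
proof -
  obtain A0 b0 where A0: "unimodular_matrix A0" "int_vec b0"
    and X: "X \<subseteq> (\<lambda>y. A0 *v y + b0) ` ((\<lambda>x. real n *\<^sub>R x) ` std_simplex)"
    using assms(3) unfolding unimodular_copy_def by blast
  have np: "real n > 0" "real CARD('n) > 0" using assms(1) by auto
  show ?thesis
  proof (cases "Flt TYPE('n)")
    case PInf
    then show ?thesis using np by simp
  next
    case MInf
    then show ?thesis using Flt_nonneg[where 'n='n] by simp
  next
    case (real F)
    have F0: "F \<ge> 0" using Flt_nonneg[where 'n='n] real by simp
    have flat: "flat F TYPE('n)" by (rule flat_of_Flt[OF real])
    have R: "FltR_X X \<le> ereal (real n * real CARD('n) * F)"
      unfolding FltR_X_def
    proof (rule Sup_least)
      fix e assume "e \<in> {ereal (lattice_width K) |K. convex_body K \<and> \<not> (\<exists>Z. R_unimodular_copy X Z \<and> Z \<subseteq> K)}"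
      then obtain K where e: "e = ereal (lattice_width K)" and K: "convex_body K"
        and nc: "\<not> (\<exists>Z. R_unimodular_copy X Z \<and> Z \<subseteq> K)" by blast
      show "e \<le> ereal (real n * real CARD('n) * F)"
      proof (rule ccontr)
        assume "\<not> e \<le> ereal (real n * real CARD('n) * F)"
        then have w: "lattice_width K > real n * real CARD('n) * F" using e by simp
        obtain A p where A: "unimodular_matrix A" "\<forall>y\<in>std_simplex. A *v (real n *\<^sub>R y) + p \<in> K"
          using R_copy[OF flat F0 assms(1) K w] by blast
        obtain B where B: "unimodular_matrix B" "(\<lambda>x. B *v x + (p - B *v b0)) ` X \<subseteq> K"
          using copy_X[OF A0(1) X A] by blast
        have "R_unimodular_copy X ((\<lambda>x. B *v x + (p - B *v b0)) ` X)"
          unfolding R_unimodular_copy_def using B(1) by blast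
        then show False using nc B(2) by blast
      qed
    qed
    have I: "Flt_X X \<le> ereal (2 * real n * real CARD('n) * F)"
      unfolding Flt_X_def
    proof (rule Sup_least)
      fix e assume "e \<in> {ereal (lattice_width K) |K. convex_body K \<and> \<not> (\<exists>Z. unimodular_copy X Z \<and> Z \<subseteq> K)}"
      then obtain K where e: "e = ereal (lattice_width K)" and K: "convex_body K"
        and nc: "\<not> (\<exists>Z. unimodular_copy X Z \<and> Z \<subseteq> K)" by blast
      have Kc: "compact K" "convex K" "K \<noteq> {}" using K by (auto simp: convex_body_def)
      show "e \<le> ereal (2 * real n * real CARD('n) * F)"
      proof (rule ccontr)
        assume "\<not> e \<le> ereal (2 * real n * real CARD('n) * F)"
        then have w: "lattice_width K > 2 * real n * real CARD('n) * F" using e by simp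
        define K2 where "K2 = (\<lambda>x. (1/2::real) *\<^sub>R x) ` K"
        have K2b: "convex_body K2" unfolding K2_def by (rule convex_body_scale[OF K])
        have "(1/2) * lattice_width K \<le> lattice_width K2" unfolding K2_def by (rule scale_lw[OF K]) simp
        then have w2: "lattice_width K2 > real n * real CARD('n) * F" using w by simp
        obtain A p where A: "unimodular_matrix A" "\<forall>y\<in>std_simplex. A *v (real n *\<^sub>R y) + p \<in> K2"
          using R_copy[OF flat F0 assms(1) K2b w2] by blast
        define T where "T = (+) p ` K2"
        have K2c: "compact K2" "convex K2" "K2 \<noteq> {}" using K2b by (auto simp: convex_body_def)
        have Tb: "convex_body T" unfolding T_def convex_body_def using K2c
          by (auto intro: compact_translation convex_translation)
        have "lattice_width K2 \<le> lattice_width T"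
        proof (rule lattice_width_ge)
          fix u :: "real^'n" assume u: "int_vec u" "u \<noteq> 0"
          have "lattice_width K2 \<le> wid u K2"
            using K2c u by (intro lattice_width_le_wid) (auto simp: compact_imp_bounded)
          also have "\<dots> \<le> wid u T" unfolding T_def
            by (rule wid_mono_shift[of _ _ p]) (use Tb K2c in \<open>auto simp: T_def convex_body_def compact_imp_bounded\<close>)
          finally show "lattice_width K2 \<le> wid u T" .
        qed
        moreover have "F \<le> real n * real CARD('n) * F"
        proof -
          have c0: "0 < CARD('n)" by simp
          have c1: "1 \<le> n * CARD('n)" using assms(1) c0 by (simp add: Suc_le_eq)
          have "1 \<le> real n * real CARD('n)" using c1 by (metis of_nat_1 of_nat_le_iff of_nat_mult)
          from mult_right_mono[OF this F0] show ?thesis by simp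
        qed
        ultimately have "F < lattice_width T" using w2 by linarith
        then obtain q where q: "q \<in> T" "int_vec q" using flat Tb unfolding flat_def by blast
        then obtain k2 where k2: "k2 \<in> K2" "q = p + k2" unfolding T_def by auto
        have AK: "\<forall>y\<in>std_simplex. A *v (real n *\<^sub>R y) + q \<in> K"
        proof
          fix y :: "real^'n" assume y: "y \<in> std_simplex"
          have "(A *v (real n *\<^sub>R y) + p) + k2 \<in> K"
            by (rule sum_in_convex[OF Kc(2), of "1/2"]) (use A(2) y k2(1) in \<open>auto simp: K2_def\<close>)
          then show "A *v (real n *\<^sub>R y) + q \<in> K" using k2(2) by (simp add: algebra_simps)
        qed
        obtain B where B: "unimodular_matrix B" "\<forall>i j. B $ i $ j \<in> \<int>"
          "(\<lambda>x. B *v x + (q - B *v b0)) ` X \<subseteq> K"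
          using copy_X[OF A0(1) X A(1) AK] by blast
        have "int_vec (q - B *v b0)" using q(2) matvec_int[OF B(2) A0(2)] by (rule int_vec_diff)
        then have "unimodular_copy X ((\<lambda>x. B *v x + (q - B *v b0)) ` X)"
          unfolding unimodular_copy_def using B(1) by blast
        then show False using nc B(3) by blast
      qed
    qed
    show ?thesis using R I real by simp
  qed
qed


end
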